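(* Let $R=R_1\times\dots\times R_w$ be a finite principal ideal ring, with $R_1,\dots,R_w$ finite chain rings, and let $C=C_1\times\dots\times C_w\subseteq R^n\cong R_1^n\times\dots\times R_w^n$ be an $R$-linear code, $C_i=\pi_i(C)$ nonzero. Let $r\ge1$ and suppose that for every $i$ the code $C_i$ has locality $r$, rank $K_i$ over $R_i$, and minimum distance $\mathrm d(C_i)=n-K_i-\lceil K_i/r\rceil+2$ (i.e. $C_i$ meets the LRC bound). Then, with $K$ the rank of $C$ over $R$, $$\mathrm d(C)=n-K-\left\lceil\frac{K}{r}\right\rceil+2 .$$
   Context: The rank of a linear code $D$ over a ring $S$ is the minimum $K$ such that there is an $S$-module monomorphism $D\to S^K$. A coordinate $i$ of a code $D$ has locality $r$ if there is $S_i\subseteq\{1,\dots,n\}\setminus\{i\}$ with $|S_i|\le r$ and $|D_{S_i}|=|D_{S_i\cup\{i\}}|$, where $D_S$ is the code punctured to the coordinates in $S$; $D$ has locality $r$ if every coordinate does. $\mathrm d$ denotes minimum Hamming distance. A finite chain ring is a finite commutative local ring whose ideals are totally ordered by inclusion. *)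

theory Defs
  imports "HOL-Algebra.Ideal" "HOL-Library.FuncSet" Complex_Main
begin

definition finite_chain_ring :: "('a, 'm) ring_scheme \<Rightarrow> bool" where
  "finite_chain_ring S \<longleftrightarrow> cring S \<and> finite (carrier S) \<and>
     (\<exists>!M. maximalideal M S) \<and>
     (\<forall>I J. ideal I S \<longrightarrow> ideal J S \<longrightarrow> I \<subseteq> J \<or> J \<subseteq> I)"

definition prod_ring :: "(nat \<Rightarrow> ('a, 'm) ring_scheme) \<Rightarrow> nat \<Rightarrow> (nat \<Rightarrow> 'a) ring" where
  "prod_ring Rs w =
    \<lparr> carrier = (\<Pi>\<^sub>E i\<in>{0..<w}. carrier (Rs i)),
      mult = (\<lambda>x y. \<lambda>i\<in>{0..<w}. x i \<otimes>\<^bsub>Rs i\<^esub> y i),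
      one = (\<lambda>i\<in>{0..<w}. \<one>\<^bsub>Rs i\<^esub>),
      zero = (\<lambda>i\<in>{0..<w}. \<zero>\<^bsub>Rs i\<^esub>),
      add = (\<lambda>x y. \<lambda>i\<in>{0..<w}. x i \<oplus>\<^bsub>Rs i\<^esub> y i) \<rparr>"

text \<open>S^n: vectors indexed by coordinates {0..<n} (paper: 1..n).\<close>
definition vecs :: "('a, 'm) ring_scheme \<Rightarrow> nat \<Rightarrow> (nat \<Rightarrow> 'a) set" where
  "vecs S n = (\<Pi>\<^sub>E j\<in>{0..<n}. carrier S)"

definition vzero :: "('a, 'm) ring_scheme \<Rightarrow> nat \<Rightarrow> nat \<Rightarrow> 'a" where
  "vzero S n = (\<lambda>j\<in>{0..<n}. \<zero>\<^bsub>S\<^esub>)"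

definition vadd :: "('a, 'm) ring_scheme \<Rightarrow> nat \<Rightarrow> (nat \<Rightarrow> 'a) \<Rightarrow> (nat \<Rightarrow> 'a) \<Rightarrow> nat \<Rightarrow> 'a" where
  "vadd S n x y = (\<lambda>j\<in>{0..<n}. x j \<oplus>\<^bsub>S\<^esub> y j)"

definition vsmult :: "('a, 'm) ring_scheme \<Rightarrow> nat \<Rightarrow> 'a \<Rightarrow> (nat \<Rightarrow> 'a) \<Rightarrow> nat \<Rightarrow> 'a" where
  "vsmult S n s x = (\<lambda>j\<in>{0..<n}. s \<otimes>\<^bsub>S\<^esub> x j)"

definition linear_code :: "('a, 'm) ring_scheme \<Rightarrow> nat \<Rightarrow> (nat \<Rightarrow> 'a) set \<Rightarrow> bool" where
  "linear_code S n D \<longleftrightarrow> D \<subseteq> vecs S n \<and> vzero S n \<in> D \<and>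
     (\<forall>x\<in>D. \<forall>y\<in>D. vadd S n x y \<in> D) \<and>
     (\<forall>s\<in>carrier S. \<forall>x\<in>D. vsmult S n s x \<in> D)"

definition module_mono :: "('a, 'm) ring_scheme \<Rightarrow> nat \<Rightarrow> (nat \<Rightarrow> 'a) set \<Rightarrow> nat
    \<Rightarrow> ((nat \<Rightarrow> 'a) \<Rightarrow> (nat \<Rightarrow> 'a)) \<Rightarrow> bool" where
  "module_mono S n D K f \<longleftrightarrow> f \<in> D \<rightarrow> vecs S K \<and> inj_on f D \<and>
     (\<forall>x\<in>D. \<forall>y\<in>D. f (vadd S n x y) = vadd S K (f x) (f y)) \<and>
     (\<forall>s\<in>carrier S. \<forall>x\<in>D. f (vsmult S n s x) = vsmult S K s (f x))"

definition code_rank :: "('a, 'm) ring_scheme \<Rightarrow> nat \<Rightarrow> (nat \<Rightarrow> 'a) set \<Rightarrow> nat" where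
  "code_rank S n D = (LEAST K. \<exists>f. module_mono S n D K f)"

definition puncture :: "(nat \<Rightarrow> 'a) set \<Rightarrow> nat set \<Rightarrow> (nat \<Rightarrow> 'a) set" where
  "puncture D T = (\<lambda>c. restrict c T) ` D"

definition coord_locality :: "nat \<Rightarrow> (nat \<Rightarrow> 'a) set \<Rightarrow> nat \<Rightarrow> nat \<Rightarrow> bool" where
  "coord_locality n D r i \<longleftrightarrow> (\<exists>T. T \<subseteq> {0..<n} - {i} \<and> card T \<le> r \<and>
       card (puncture D T) = card (puncture D (insert i T)))"

definition has_locality :: "nat \<Rightarrow> (nat \<Rightarrow> 'a) set \<Rightarrow> nat \<Rightarrow> bool" where
  "has_locality n D r \<longleftrightarrow> (\<forall>i\<in>{0..<n}. coord_locality n D r i)"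

definition hamming :: "nat \<Rightarrow> (nat \<Rightarrow> 'a) \<Rightarrow> (nat \<Rightarrow> 'a) \<Rightarrow> nat" where
  "hamming n x y = card {j\<in>{0..<n}. x j \<noteq> y j}"

definition min_dist :: "nat \<Rightarrow> (nat \<Rightarrow> 'a) set \<Rightarrow> nat" where
  "min_dist n D = Min {hamming n x y | x y. x \<in> D \<and> y \<in> D \<and> x \<noteq> y}"

definition proj_code :: "nat \<Rightarrow> nat \<Rightarrow> (nat \<Rightarrow> nat \<Rightarrow> 'a) set \<Rightarrow> (nat \<Rightarrow> 'a) set" where
  "proj_code n i C = (\<lambda>c. \<lambda>j\<in>{0..<n}. c j i) ` C"

end

theory Submission imports Defs begin
definition pr :: "nat \<Rightarrow> nat \<Rightarrow> (nat \<Rightarrow> nat \<Rightarrow> 'a) \<Rightarrow> nat \<Rightarrow> 'a" where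
  "pr m i c = (\<lambda>j\<in>{0..<m}. c j i)"
definition Eb :: "(nat \<Rightarrow> ('a,'b) ring_scheme) \<Rightarrow> nat \<Rightarrow> nat \<Rightarrow> nat \<Rightarrow> (nat \<Rightarrow> 'a) \<Rightarrow> nat \<Rightarrow> nat \<Rightarrow> 'a" where
  "Eb Rs w m i a = (\<lambda>j\<in>{0..<m}. \<lambda>k\<in>{0..<w}. if k = i then a j else \<zero>\<^bsub>Rs k\<^esub>)"
definition ei :: "(nat \<Rightarrow> ('a,'b) ring_scheme) \<Rightarrow> nat \<Rightarrow> nat \<Rightarrow> nat \<Rightarrow> 'a" where
  "ei Rs w i = (\<lambda>k\<in>{0..<w}. if k = i then \<one>\<^bsub>Rs k\<^esub> else \<zero>\<^bsub>Rs k\<^esub>)"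
definition lft :: "(nat \<Rightarrow> ('a,'b) ring_scheme) \<Rightarrow> nat \<Rightarrow> nat \<Rightarrow> 'a \<Rightarrow> nat \<Rightarrow> 'a" where
  "lft Rs w i s = (\<lambda>k\<in>{0..<w}. if k = i then s else \<one>\<^bsub>Rs k\<^esub>)"

lemma vecsP: "vecs (prod_ring Rs w) m = (\<Pi>\<^sub>E j\<in>{0..<m}. \<Pi>\<^sub>E k\<in>{0..<w}. carrier (Rs k))"
  by (simp add: vecs_def prod_ring_def)

lemma pr_in: "x \<in> vecs (prod_ring Rs w) m \<Longrightarrow> i < w \<Longrightarrow> pr m i x \<in> vecs (Rs i) m"
  unfolding vecsP by (auto simp: vecs_def pr_def PiE_iff)

lemma eq_vec: assumes "x \<in> vecs (prod_ring Rs w) m" "y \<in> vecs (prod_ring Rs w) m"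
  "\<And>i. i<w \<Longrightarrow> pr m i x = pr m i y" shows "x = y"
proof -
  have h: "x j k = y j k" if "j<m" "k<w" for j k
    using fun_cong[OF assms(3)[OF that(2)], of j] that by (simp add: pr_def)
  show ?thesis
  proof (rule ext)
    fix j show "x j = y j"
    proof (cases "j<m")
      case True
      then have "x j \<in> (\<Pi>\<^sub>E k\<in>{0..<w}. carrier (Rs k))" "y j \<in> (\<Pi>\<^sub>E k\<in>{0..<w}. carrier (Rs k))"
        using assms by (auto simp: vecsP)
      then show ?thesis by (rule PiE_ext) (use h True in auto)
    next
      case False
      have "x j = undefined" by (rule PiE_arb[OF assms(1)[unfolded vecsP]]) (use False in simp)
      moreover have "y j = undefined" by (rule PiE_arb[OF assms(2)[unfolded vecsP]]) (use False in simp)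
      ultimately show ?thesis by simp
    qed
  qed
qed

lemma pr_vadd: "i<w \<Longrightarrow> pr m i (vadd (prod_ring Rs w) m x y) = vadd (Rs i) m (pr m i x) (pr m i y)"
  by (auto simp: pr_def vadd_def prod_ring_def)

lemma pr_vsmult: "i<w \<Longrightarrow> pr m i (vsmult (prod_ring Rs w) m s x) = vsmult (Rs i) m (s i) (pr m i x)"
  by (auto simp: pr_def vsmult_def prod_ring_def)

lemma pr_Eb: assumes "a \<in> vecs (Rs i) m" "i<w" shows "pr m i (Eb Rs w m i a) = a"
proof -
  have "pr m i (Eb Rs w m i a) = restrict a {0..<m}" unfolding pr_def Eb_def
    by (rule restrict_ext) (use \<open>i<w\<close> in simp)
  also have "\<dots> = a" using \<open>a \<in> vecs (Rs i) m\<close> unfolding vecs_def by (rule PiE_restrict)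
  finally show ?thesis .
qed

context
  fixes Rs :: "nat \<Rightarrow> 'a ring" and w :: nat
  assumes rings: "\<And>i. i<w \<Longrightarrow> ring (Rs i)"
begin

lemma ei_mult: assumes "x \<in> vecs (prod_ring Rs w) m" "i<w"
  shows "vsmult (prod_ring Rs w) m (ei Rs w i) x = Eb Rs w m i (pr m i x)"
proof -
  have "(ei Rs w i k) \<otimes>\<^bsub>Rs k\<^esub> x j k = (if k = i then x j i else \<zero>\<^bsub>Rs k\<^esub>)" if "j<m" "k<w" for j k
  proof -
    have "x j k \<in> carrier (Rs k)" using assms that unfolding vecsP by (auto simp: PiE_iff)
    then show ?thesis using rings[OF that(2)] that by (auto simp: ei_def ring.ring_simprules)
  qed
  then show ?thesis by (auto simp: vsmult_def Eb_def prod_ring_def pr_def intro!: ext)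
qed

lemma Eb_vadd: assumes "a \<in> vecs (Rs i) m" "b \<in> vecs (Rs i) m" "i<w"
  shows "Eb Rs w m i (vadd (Rs i) m a b) = vadd (prod_ring Rs w) m (Eb Rs w m i a) (Eb Rs w m i b)"
proof -
  have "\<zero>\<^bsub>Rs k\<^esub> \<oplus>\<^bsub>Rs k\<^esub> \<zero>\<^bsub>Rs k\<^esub> = \<zero>\<^bsub>Rs k\<^esub>" if "k<w" for k
    using rings[OF that] by (simp add: ring.ring_simprules)
  then show ?thesis by (auto simp: vadd_def Eb_def prod_ring_def intro!: ext)
qed

lemma Eb_vsmult: assumes "a \<in> vecs (Rs i) m" "s \<in> carrier (Rs i)" "i<w"
  shows "Eb Rs w m i (vsmult (Rs i) m s a) = vsmult (prod_ring Rs w) m (lft Rs w i s) (Eb Rs w m i a)"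
proof -
  have "\<one>\<^bsub>Rs k\<^esub> \<otimes>\<^bsub>Rs k\<^esub> \<zero>\<^bsub>Rs k\<^esub> = \<zero>\<^bsub>Rs k\<^esub>" if "k<w" for k
    using rings[OF that] by (simp add: ring.ring_simprules)
  then show ?thesis by (auto simp: vsmult_def Eb_def prod_ring_def lft_def intro!: ext)
qed

lemma ei_carrier: "i<w \<Longrightarrow> ei Rs w i \<in> carrier (prod_ring Rs w)"
  using rings by (auto simp: ei_def prod_ring_def ring.ring_simprules)

lemma lft_carrier: "i<w \<Longrightarrow> s \<in> carrier (Rs i) \<Longrightarrow> lft Rs w i s \<in> carrier (prod_ring Rs w)"
  using rings by (auto simp: lft_def prod_ring_def ring.ring_simprules)

lemma Eb_in_vecs: assumes "a \<in> vecs (Rs i) m" "i<w" shows "Eb Rs w m i a \<in> vecs (prod_ring Rs w) m"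
proof -
  have c: "a j \<in> carrier (Rs i)" if "j<m" for j using assms(1) that by (auto simp: vecs_def)
  show ?thesis unfolding vecsP Eb_def using c rings by (auto simp: ring.ring_simprules)
qed


lemma mono_id: "D \<subseteq> vecs S n \<Longrightarrow> module_mono S n D n id"
  by (auto simp: module_mono_def)

lemma rank_ex: "D \<subseteq> vecs S n \<Longrightarrow> \<exists>f. module_mono S n D (code_rank S n D) f"
  unfolding code_rank_def by (rule LeastI_ex) (use mono_id in blast)

lemma rank_le: "module_mono S n D K f \<Longrightarrow> code_rank S n D \<le> K"
  unfolding code_rank_def by (rule Least_le) blast

lemma proj_eq: "proj_code n i C = pr n i ` C"
  by (simp add: proj_code_def pr_def)

lemma Eb_inC: assumes "linear_code (prod_ring Rs w) n C" "i<w" "a \<in> proj_code n i C"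
  shows "Eb Rs w n i a \<in> C"
proof -
  obtain c where c: "c \<in> C" "a = pr n i c" using assms(3) by (auto simp: proj_eq)
  have "c \<in> vecs (prod_ring Rs w) n" using assms(1) c by (auto simp: linear_code_def)
  then have "vsmult (prod_ring Rs w) n (ei Rs w i) c = Eb Rs w n i a" using c assms(2) by (simp add: ei_mult)
  moreover have "vsmult (prod_ring Rs w) n (ei Rs w i) c \<in> C"
    using assms(1) c ei_carrier[OF assms(2)] by (auto simp: linear_code_def)
  ultimately show ?thesis by simp
qed

lemma projC_sub: "linear_code (prod_ring Rs w) n C \<Longrightarrow> i<w \<Longrightarrow> proj_code n i C \<subseteq> vecs (Rs i) n"
  by (auto simp: proj_eq linear_code_def intro: pr_in)

lemma rank_comp: assumes lin: "linear_code (prod_ring Rs w) n C" and i: "i<w"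
  and f: "module_mono (prod_ring Rs w) n C K f"
  shows "module_mono (Rs i) n (proj_code n i C) K (\<lambda>a. pr K i (f (Eb Rs w n i a)))"
proof -
  let ?P = "prod_ring Rs w"
  let ?D = "proj_code n i C"
  let ?g = "\<lambda>a. pr K i (f (Eb Rs w n i a))"
  have Dv: "a \<in> vecs (Rs i) n" if "a \<in> ?D" for a using projC_sub[OF lin i] that by auto
  have EC: "Eb Rs w n i a \<in> C" if "a \<in> ?D" for a using Eb_inC[OF lin i that] .
  have fv: "f (Eb Rs w n i a) \<in> vecs ?P K" if "a \<in> ?D" for a using f EC[OF that] by (auto simp: module_mono_def)
  have key: "f (Eb Rs w n i a) = Eb Rs w K i (?g a)" if "a \<in> ?D" for a
  proof -
    have "Eb Rs w n i a = vsmult ?P n (ei Rs w i) (Eb Rs w n i a)"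
      using ei_mult[OF Eb_in_vecs[OF Dv[OF that] i] i] pr_Eb[where Rs=Rs and w=w, OF Dv[OF that] i] by simp
    then have "f (Eb Rs w n i a) = vsmult ?P K (ei Rs w i) (f (Eb Rs w n i a))"
      using f EC[OF that] ei_carrier[OF i] unfolding module_mono_def by metis
    also have "\<dots> = Eb Rs w K i (?g a)" using ei_mult[OF fv[OF that] i] .
    finally show ?thesis .
  qed
  show ?thesis unfolding module_mono_def
  proof (intro conjI ballI)
    show "?g \<in> ?D \<rightarrow> vecs (Rs i) K" using fv pr_in i by blast
    show "inj_on ?g ?D"
    proof (rule inj_onI)
      fix a b assume ab: "a \<in> ?D" "b \<in> ?D" "?g a = ?g b"
      then have "f (Eb Rs w n i a) = f (Eb Rs w n i b)" using key by metis
      then have "Eb Rs w n i a = Eb Rs w n i b" using f EC ab unfolding module_mono_def inj_on_def by blast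
      then show "a = b" using pr_Eb Dv ab i by metis
    qed
    fix x y assume xy: "x \<in> ?D" "y \<in> ?D"
    have "f (Eb Rs w n i (vadd (Rs i) n x y)) = f (vadd ?P n (Eb Rs w n i x) (Eb Rs w n i y))"
      using Eb_vadd[OF Dv[OF xy(1)] Dv[OF xy(2)] i] by simp
    also have "\<dots> = vadd ?P K (f (Eb Rs w n i x)) (f (Eb Rs w n i y))"
      using f EC xy unfolding module_mono_def by blast
    finally show "?g (vadd (Rs i) n x y) = vadd (Rs i) K (?g x) (?g y)" using pr_vadd i by metis
  next
    fix s x assume sx: "s \<in> carrier (Rs i)" "x \<in> ?D"
    have "f (Eb Rs w n i (vsmult (Rs i) n s x)) = f (vsmult ?P n (lft Rs w i s) (Eb Rs w n i x))"
      using Eb_vsmult[OF Dv[OF sx(2)] sx(1) i] by simp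
    also have "\<dots> = vsmult ?P K (lft Rs w i s) (f (Eb Rs w n i x))"
      using f EC sx lft_carrier[OF i sx(1)] unfolding module_mono_def by blast
    finally have "?g (vsmult (Rs i) n s x) = pr K i (vsmult ?P K (lft Rs w i s) (f (Eb Rs w n i x)))"
      by simp
    also have "\<dots> = vsmult (Rs i) K (lft Rs w i s i) (?g x)" by (rule pr_vsmult[OF i])
    also have "lft Rs w i s i = s" using i by (simp add: lft_def)
    finally show "?g (vsmult (Rs i) n s x) = vsmult (Rs i) K s (?g x)" .
  qed
qed


lemma rank_glue: assumes lin: "linear_code (prod_ring Rs w) n C"
  and fs: "\<And>i. i<w \<Longrightarrow> module_mono (Rs i) n (proj_code n i C) (Ks i) (fs i)"
  and M: "\<And>i. i<w \<Longrightarrow> Ks i \<le> M"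
  shows "module_mono (prod_ring Rs w) n C M
     (\<lambda>c. \<lambda>k\<in>{0..<M}. \<lambda>i\<in>{0..<w}. if k < Ks i then fs i (pr n i c) k else \<zero>\<^bsub>Rs i\<^esub>)"
proof -
  let ?P = "prod_ring Rs w"
  let ?F = "\<lambda>c. \<lambda>k\<in>{0..<M}. \<lambda>i\<in>{0..<w}. if k < Ks i then fs i (pr n i c) k else \<zero>\<^bsub>Rs i\<^esub>"
  have Cv: "c \<in> vecs ?P n" if "c \<in> C" for c using lin that by (auto simp: linear_code_def)
  have prC: "pr n i c \<in> proj_code n i C" if "c \<in> C" for c i using that by (auto simp: proj_eq)
  have fsv: "fs i (pr n i c) \<in> vecs (Rs i) (Ks i)" if "c \<in> C" "i<w" for c i
    using fs[OF that(2)] prC[OF that(1)] by (auto simp: module_mono_def)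
  have fsc: "fs i (pr n i c) k \<in> carrier (Rs i)" if "c \<in> C" "i<w" "k < Ks i" for c i k
    using fsv[OF that(1,2)] that(3) by (auto simp: vecs_def)
  show ?thesis unfolding module_mono_def
  proof (intro conjI ballI)
    show "?F \<in> C \<rightarrow> vecs ?P M"
      unfolding vecsP using fsc rings by (auto simp: ring.ring_simprules)
    show "inj_on ?F C"
    proof (rule inj_onI)
      fix c c' assume cc: "c \<in> C" "c' \<in> C" "?F c = ?F c'"
      have "pr n i c = pr n i c'" if i: "i<w" for i
      proof -
        have "fs i (pr n i c) = fs i (pr n i c')"
        proof (rule PiE_ext)
          show "fs i (pr n i c) \<in> (\<Pi>\<^sub>E k\<in>{0..<Ks i}. carrier (Rs i))" using fsv[OF cc(1) i] by (simp add: vecs_def)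
          show "fs i (pr n i c') \<in> (\<Pi>\<^sub>E k\<in>{0..<Ks i}. carrier (Rs i))" using fsv[OF cc(2) i] by (simp add: vecs_def)
          fix k assume k: "k \<in> {0..<Ks i}"
          then have "k < M" using M[OF i] by auto
          then show "fs i (pr n i c) k = fs i (pr n i c') k"
            using fun_cong[OF fun_cong[OF cc(3), of k], of i] k i by auto
        qed
        then show ?thesis using fs[OF i] prC cc unfolding module_mono_def inj_on_def by blast
      qed
      then show "c = c'" using eq_vec Cv cc by blast
    qed
  next
    fix c c' assume cc: "c \<in> C" "c' \<in> C"
    obtain d where d: "d = vadd ?P n c c'" by blast
    have A: "fs i (pr n i d) k = fs i (pr n i c) k \<oplus>\<^bsub>Rs i\<^esub> fs i (pr n i c') k"
      if "i<w" "k < Ks i" for i k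
    proof -
      have "fs i (pr n i d) = fs i (vadd (Rs i) n (pr n i c) (pr n i c'))" using d pr_vadd that by metis
      also have "\<dots> = vadd (Rs i) (Ks i) (fs i (pr n i c)) (fs i (pr n i c'))"
        using fs[OF that(1)] prC cc unfolding module_mono_def by blast
      finally show ?thesis using that by (simp add: vadd_def)
    qed
    have Z: "\<zero>\<^bsub>Rs i\<^esub> = \<zero>\<^bsub>Rs i\<^esub> \<oplus>\<^bsub>Rs i\<^esub> \<zero>\<^bsub>Rs i\<^esub>" if "i<w" for i
      using rings[OF that] by (simp add: ring.ring_simprules)
    have addP: "add ?P = (\<lambda>x y. \<lambda>i\<in>{0..<w}. x i \<oplus>\<^bsub>Rs i\<^esub> y i)" by (simp add: prod_ring_def)
    have "?F d = vadd ?P M (?F c) (?F c')"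
      unfolding vadd_def addP
      apply (intro restrict_ext)
      apply (simp only: restrict_apply')
      using A Z by auto
    then show "?F (vadd ?P n c c') = vadd ?P M (?F c) (?F c')" unfolding d .
  next
    fix s c assume sc: "s \<in> carrier ?P" "c \<in> C"
    have si: "s i \<in> carrier (Rs i)" if "i<w" for i using sc(1) that by (auto simp: prod_ring_def)
    obtain d where d: "d = vsmult ?P n s c" by blast
    have A: "fs i (pr n i d) k = s i \<otimes>\<^bsub>Rs i\<^esub> fs i (pr n i c) k"
      if "i<w" "k < Ks i" for i k
    proof -
      have "fs i (pr n i d) = fs i (vsmult (Rs i) n (s i) (pr n i c))" using d pr_vsmult that by metis
      also have "\<dots> = vsmult (Rs i) (Ks i) (s i) (fs i (pr n i c))"
        using fs[OF that(1)] prC sc si[OF that(1)] unfolding module_mono_def by blast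
      finally show ?thesis using that by (simp add: vsmult_def)
    qed
    have Z: "\<zero>\<^bsub>Rs i\<^esub> = s i \<otimes>\<^bsub>Rs i\<^esub> \<zero>\<^bsub>Rs i\<^esub>" if "i<w" for i
      using rings[OF that] si[OF that] by (simp add: ring.ring_simprules)
    have multP: "mult ?P = (\<lambda>x y. \<lambda>i\<in>{0..<w}. x i \<otimes>\<^bsub>Rs i\<^esub> y i)" by (simp add: prod_ring_def)
    have "?F d = vsmult ?P M s (?F c)"
      unfolding vsmult_def multP
      apply (intro restrict_ext)
      apply (simp only: restrict_apply')
      using A Z by auto
    then show "?F (vsmult ?P n s c) = vsmult ?P M s (?F c)" unfolding d .
  qed
qed

end

lemma hamming_le: "hamming n x y \<le> n"
proof -
  have "card {j\<in>{0..<n}. x j \<noteq> y j} \<le> card {0..<n}" by (rule card_mono) auto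
  then show ?thesis by (simp add: hamming_def)
qed

lemma md_fin: "finite {hamming n x y |x y. x\<in>D \<and> y\<in>D \<and> x\<noteq>y}"
  by (rule finite_subset[of _ "{..n}"]) (use hamming_le in auto)

lemma md_le: "x\<in>D \<Longrightarrow> y\<in>D \<Longrightarrow> x\<noteq>y \<Longrightarrow> min_dist n D \<le> hamming n x y"
  unfolding min_dist_def by (rule Min_le[OF md_fin]) blast

lemma md_in: assumes "x\<in>D" "y\<in>D" "x\<noteq>y"
  shows "\<exists>a b. a\<in>D \<and> b\<in>D \<and> a\<noteq>b \<and> min_dist n D = hamming n a b"
proof -
  have "min_dist n D \<in> {hamming n x y |x y. x\<in>D \<and> y\<in>D \<and> x\<noteq>y}"
    unfolding min_dist_def by (rule Min_in[OF md_fin]) (use assms in blast)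
  then show ?thesis by blast
qed

theorem mainTheorem5:
  fixes Rs :: "nat \<Rightarrow> 'a ring" and w n r :: nat
    and C :: "(nat \<Rightarrow> nat \<Rightarrow> 'a) set"
  assumes "w \<ge> 1"
    and "\<And>i. i < w \<Longrightarrow> finite_chain_ring (Rs i)"
    and "linear_code (prod_ring Rs w) n C"
    and "\<And>i. i < w \<Longrightarrow> proj_code n i C \<noteq> {vzero (Rs i) n}"
    and "r \<ge> 1"
    and "\<And>i. i < w \<Longrightarrow> has_locality n (proj_code n i C) r"
    and "\<And>i. i < w \<Longrightarrow>
       int (min_dist n (proj_code n i C)) =
         int n - int (code_rank (Rs i) n (proj_code n i C))
         - \<lceil>real (code_rank (Rs i) n (proj_code n i C)) / real r\<rceil> + 2"
  shows "int (min_dist n C) =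
           int n - int (code_rank (prod_ring Rs w) n C)
           - \<lceil>real (code_rank (prod_ring Rs w) n C) / real r\<rceil> + 2"
proof -
  let ?P = "prod_ring Rs w"
  let ?Ci = "\<lambda>i. proj_code n i C"
  let ?K = "\<lambda>i. code_rank (Rs i) n (proj_code n i C)"
  let ?KC = "code_rank ?P n C"
  let ?D = "\<lambda>i. min_dist n (proj_code n i C)"
  have rings: "\<And>i. i<w \<Longrightarrow> ring (Rs i)" using assms(2) by (auto simp: finite_chain_ring_def cring_def)
  note lin = assms(3)
  have Cv: "C \<subseteq> vecs ?P n" using lin by (simp add: linear_code_def)
  have Civ: "?Ci i \<subseteq> vecs (Rs i) n" if "i<w" for i using projC_sub[OF rings lin that] .
  obtain fC where fC: "module_mono ?P n C ?KC fC" using rank_ex[OF rings Cv] by blast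
  have K_le: "?K i \<le> ?KC" if "i<w" for i
    using rank_le[OF rings rank_comp[OF rings lin that fC]] .
  define M where "M = Max (?K ` {0..<w})"
  have ne: "?K ` {0..<w} \<noteq> {}" using assms(1) by auto
  obtain i0 where i0: "i0 < w" "?K i0 = M" using Max_in[OF _ ne] unfolding M_def by auto
  have KM: "?K i \<le> M" if "i<w" for i unfolding M_def by (rule Max_ge) (use that in auto)
  have "\<forall>i. \<exists>f. i<w \<longrightarrow> module_mono (Rs i) n (?Ci i) (?K i) f"
    using rank_ex[OF rings] Civ by blast
  then obtain fs where fs: "\<And>i. i<w \<Longrightarrow> module_mono (Rs i) n (?Ci i) (?K i) (fs i)"
    by metis
  have "?KC \<le> M" using rank_le[OF rings rank_glue[OF rings lin fs KM]] .
  then have KC: "?KC = ?K i0" using K_le[OF i0(1)] i0(2) by simp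
  have Dmono: "?D i0 \<le> ?D i" if "i<w" for i
  proof -
    have "real (?K i) / real r \<le> real (?K i0) / real r"
      using KM[OF that] i0(2) by (intro divide_right_mono) auto
    then have "\<lceil>real (?K i) / real r\<rceil> \<le> \<lceil>real (?K i0) / real r\<rceil>" by (rule ceiling_mono)
    then have "int (?D i0) \<le> int (?D i)" using assms(7)[OF that] assms(7)[OF i0(1)] KM[OF that] i0(2) by linarith
    then show ?thesis by simp
  qed
  have vz: "vzero (Rs i) n \<in> ?Ci i" if "i<w" for i
  proof -
    have "vzero ?P n \<in> C" using lin by (simp add: linear_code_def)
    moreover have "pr n i (vzero ?P n) = vzero (Rs i) n" using that by (auto simp: pr_def vzero_def prod_ring_def)
    ultimately show ?thesis by (force simp: proj_eq[OF rings])
  qed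
  obtain a0 where a0: "a0 \<in> ?Ci i0" "a0 \<noteq> vzero (Rs i0) n" using assms(4)[OF i0(1)] vz[OF i0(1)] by blast
  obtain a b where ab: "a \<in> ?Ci i0" "b \<in> ?Ci i0" "a \<noteq> b" "?D i0 = hamming n a b"
    using md_in[OF a0(1) vz[OF i0(1)] a0(2)] by blast
  have av: "a \<in> vecs (Rs i0) n" and bv: "b \<in> vecs (Rs i0) n" using Civ[OF i0(1)] ab by auto
  let ?Ea = "Eb Rs w n i0 a" and ?Eb = "Eb Rs w n i0 b"
  have EaC: "?Ea \<in> C" and EbC: "?Eb \<in> C" using Eb_inC[OF rings lin i0(1)] ab by auto
  have Ene: "?Ea \<noteq> ?Eb" using pr_Eb[where Rs=Rs and w=w, OF av i0(1)] pr_Eb[where Rs=Rs and w=w, OF bv i0(1)] ab(3) by metis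
  have "{j\<in>{0..<n}. ?Ea j \<noteq> ?Eb j} = {j\<in>{0..<n}. a j \<noteq> b j}"
  proof (intro Collect_cong conj_cong refl)
    fix j assume j: "j \<in> {0..<n}"
    have "?Ea j i0 = a j" "?Eb j i0 = b j" using j i0(1) by (auto simp: Eb_def)
    moreover have "a j = b j \<Longrightarrow> ?Ea j = ?Eb j" unfolding Eb_def by (intro arg_cong[where f="\<lambda>t. restrict t {0..<n} j"] ext) simp
    ultimately show "(?Ea j \<noteq> ?Eb j) = (a j \<noteq> b j)" by metis
  qed
  then have hE: "hamming n ?Ea ?Eb = hamming n a b" by (simp add: hamming_def)
  have d_le: "min_dist n C \<le> ?D i0" using md_le[OF EaC EbC Ene, of n] hE ab(4) by simp
  obtain x y where xy: "x \<in> C" "y \<in> C" "x \<noteq> y" "min_dist n C = hamming n x y"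
    using md_in[OF EaC EbC Ene, of n] by blast
  obtain i where i: "i<w" "pr n i x \<noteq> pr n i y" using eq_vec[of x Rs w n y] Cv xy by blast
  have "?D i \<le> hamming n (pr n i x) (pr n i y)"
    by (rule md_le) (use xy i in \<open>auto simp: proj_code_def pr_def\<close>)
  also have "\<dots> \<le> hamming n x y" unfolding hamming_def
    by (rule card_mono) (auto simp: pr_def)
  finally have "?D i0 \<le> min_dist n C" using Dmono[OF i(1)] xy(4) by simp
  then have "min_dist n C = ?D i0" using d_le by simp
  then show ?thesis using assms(7)[OF i0(1)] KC by simp
qed

end
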